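(* Let $n\ge1$ and $\mathbf{x}\in\{0,1\}^n$. Let $\omega=\omega(\mathbf{x}')$, let $m$ be the number of 1-runs in $\mathbf{x}'$ and $m_1$ the number of these of length $1$. For $j=0,1,2,3,4$ let $A_j$ be the number of $\mathbf{y}\in\Phi_2(\mathbf{x})$ with $\omega(\mathbf{y}')=\omega-j$. Then (a) $A_0+A_1=1+m+\binom{m}{2}$; (b) $A_2+A_3=(\omega-m)(m+1)-(m-m_1)$; (c) $A_4=\binom{\omega-m}{2}-(\omega-m)+(m-m_1)$.
   Context: A grain pattern of length $n$ is a subset $E\subseteq\{2,\dots,n\}$ containing no two consecutive integers. For such $E$, $\phi_E:\{0,1\}^n\to\{0,1\}^n$ sends $\mathbf{x}=(x_1,\dots,x_n)$ to $\mathbf{y}$ with $y_j=x_{j-1}$ if $j\in E$ and $y_j=x_j$ otherwise. $\Phi_t(\mathbf{x})=\{\phi_E(\mathbf{x}): E \text{ a grain pattern of length } n,\ |E|\le t\}$ (a set). The derivative sequence of $\mathbf{x}$ is $\mathbf{x}'=(x'_2,\dots,x'_n)$ with $x'_j=x_{j-1}\oplus x_j$ (mod 2); $\omega(\cdot)$ is Hamming weight; a 1-run of $\mathbf{x}'$ is a maximal block of consecutive 1s. Binomial coefficients $\binom{a}{b}$ are $0$ when $b>a\ge0$. *)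

theory Defs
  imports Main
begin

text \<open>Binary words x in {0,1}^n are represented as bool lists of length n;
  coordinate x_j (1-based, 1 \<le> j \<le> n) is  x ! (j - 1).\<close>

definition bit :: "bool list \<Rightarrow> nat \<Rightarrow> bool" where
  "bit x j = x ! (j - 1)"

definition grain_pattern :: "nat \<Rightarrow> nat set \<Rightarrow> bool" where
  "grain_pattern n E \<longleftrightarrow> E \<subseteq> {2..n} \<and> (\<forall>j\<in>E. Suc j \<notin> E)"

definition phi :: "nat set \<Rightarrow> bool list \<Rightarrow> bool list" where
  "phi E x = map (\<lambda>j. if j \<in> E then bit x (j - 1) else bit x j) [1..<length x + 1]"

definition Phi :: "nat \<Rightarrow> bool list \<Rightarrow> bool list set" where
  "Phi t x = {phi E x | E. grain_pattern (length x) E \<and> card E \<le> t}"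

definition deriv :: "bool list \<Rightarrow> bool list" where
  "deriv x = map (\<lambda>j. bit x (j - 1) \<noteq> bit x j) [2..<length x + 1]"

definition weight :: "bool list \<Rightarrow> nat" where
  "weight y = length (filter id y)"

text \<open>1-runs: maximal blocks of consecutive 1s, identified by their starting index.\<close>
definition run_starts :: "bool list \<Rightarrow> nat set" where
  "run_starts y = {i. i < length y \<and> y ! i \<and> (i = 0 \<or> \<not> y ! (i - 1))}"

definition num_runs :: "bool list \<Rightarrow> nat" where
  "num_runs y = card (run_starts y)"

definition num_runs_len1 :: "bool list \<Rightarrow> nat" where
  "num_runs_len1 y = card {i \<in> run_starts y. Suc i = length y \<or> \<not> y ! Suc i}"

end

theory Submission imports Defs begin

definition PP :: "bool list \<Rightarrow> nat set" where
  "PP x = {j\<in>{2..length x}. bit x (j-1) \<noteq> bit x j}"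

definition nonadj :: "nat set \<Rightarrow> bool" where
  "nonadj E \<longleftrightarrow> (\<forall>j\<in>E. Suc j \<notin> E)"

lemma PP_sub: "PP x \<subseteq> {2..length x}" by (auto simp: PP_def)
lemma PP_fin: "finite (PP x)" using PP_sub finite_subset by blast

lemma len_phi[simp]: "length (phi E x) = length x" by (simp add: phi_def del: upt_Suc)

lemma bit_phi: "1 \<le> j \<Longrightarrow> j \<le> length x \<Longrightarrow>
   bit (phi E x) j = (if j\<in>E then bit x (j-1) else bit x j)"
  unfolding phi_def bit_def
  by (simp add: nth_map nth_upt del: upt_Suc)

lemma weight_deriv: "weight (deriv x) = card (PP x)"
proof -
  have "weight (deriv x) = length (filter (\<lambda>j. bit x (j - 1) \<noteq> bit x j) [2..<length x + 1])"
    by (simp add: weight_def deriv_def filter_map comp_def del: upt_Suc)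
  also have "\<dots> = card ({j. bit x (j - 1) \<noteq> bit x j} \<inter> {2..length x})"
    by (subst distinct_length_filter) (auto simp del: upt_Suc simp: atLeastLessThanSuc_atLeastAtMost)
  also have "\<dots> = card (PP x)" unfolding PP_def by (rule arg_cong[where f=card]) auto
  finally show ?thesis .
qed

lemma phi_eq:
  assumes "\<And>j. 1 \<le> j \<Longrightarrow> j \<le> length x \<Longrightarrow> bit (phi E x) j = bit (phi F x) j"
  shows "phi E x = phi F x"
proof (rule nth_equalityI)
  show "length (phi E x) = length (phi F x)" by simp
  fix i assume "i < length (phi E x)"
  then show "phi E x ! i = phi F x ! i" using assms[of "Suc i"] by (simp add: bit_def)
qed

lemma phi_restrict:
  assumes "E \<subseteq> {2..length x}"
  shows "phi E x = phi (E \<inter> PP x) x"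
  by (rule phi_eq) (use assms in \<open>auto simp: bit_phi PP_def\<close>)

lemma phi_inj:
  assumes "E \<subseteq> PP x" "F \<subseteq> PP x" "phi E x = phi F x"
  shows "E = F"
proof -
  have "\<And>G. G \<subseteq> PP x \<Longrightarrow> G = {j\<in>PP x. bit (phi G x) j \<noteq> bit x j}"
    by (auto simp: bit_phi PP_def split: if_splits)
  then show ?thesis using assms by metis
qed


definition dropI :: "bool list \<Rightarrow> nat set \<Rightarrow> int" where
  "dropI x E = (\<Sum>e\<in>E. 2 * of_bool (Suc e \<in> PP x) + of_bool (e = length x))"

lemma PP_phi:
  assumes "E \<subseteq> PP x" "nonadj E"
  shows "PP (phi E x) = (PP x - E - Suc ` E) \<union> (Suc ` E \<inter> {..length x} - PP x)"
proof (rule set_eqI)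
  fix j
  have Er: "\<And>j. j \<in> E \<Longrightarrow> 2 \<le> j \<and> j \<le> length x \<and> bit x (j-1) \<noteq> bit x j"
    using assms(1) by (auto simp: PP_def)
  show "j \<in> PP (phi E x) \<longleftrightarrow> j \<in> (PP x - E - Suc ` E) \<union> (Suc ` E \<inter> {..length x} - PP x)"
  proof (cases "2 \<le> j \<and> j \<le> length x")
    case False
    have "j \<notin> PP (phi E x)" "j \<notin> PP x" using False PP_sub[of x] PP_sub[of "phi E x"] by auto
    moreover have "j \<notin> Suc ` E \<inter> {..length x}" using False Er by force
    ultimately show ?thesis by blast
  next
    case True
    have b1: "bit (phi E x) j = (if j\<in>E then bit x (j-1) else bit x j)"
      using True by (intro bit_phi) auto
    have b2: "bit (phi E x) (j-1) = (if j-1\<in>E then bit x (j-1-1) else bit x (j-1))"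
      using True by (intro bit_phi) auto
    have L: "j \<in> PP (phi E x) \<longleftrightarrow> bit (phi E x) (j-1) \<noteq> bit (phi E x) j"
      using True by (simp add: PP_def)
    have R1: "j \<in> PP x \<longleftrightarrow> bit x (j-1) \<noteq> bit x j"
      using True by (simp add: PP_def)
    have sucE: "j \<in> Suc ` E \<longleftrightarrow> j - 1 \<in> E" using True by (cases j) auto
    show ?thesis
    proof (cases "j \<in> E")
      case jE: True
      have "j - 1 \<notin> E"
      proof
        assume "j - 1 \<in> E"
        then have "Suc (j - 1) \<notin> E" using assms(2) unfolding nonadj_def by blast
        moreover have "Suc (j - 1) = j" using True by simp
        ultimately show False using jE by simp
      qed
      then show ?thesis using jE L b1 b2 sucE by auto
    next
      case jE: False
      show ?thesis
      proof (cases "j - 1 \<in> E")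
        case True
        have "bit x (j-1-1) \<noteq> bit x (j-1)" using Er[OF True] by simp
        then show ?thesis using jE True L b1 b2 sucE R1 \<open>2 \<le> j \<and> j \<le> length x\<close> by auto
      next
        case False
        then show ?thesis using jE L b1 b2 sucE R1 by auto
      qed
    qed
  qed
qed


lemma weight_phi:
  assumes E: "E \<subseteq> PP x" and na: "nonadj E"
  shows "int (card (PP (phi E x))) = int (card (PP x)) - dropI x E"
proof -
  let ?P = "PP x" and ?n = "length x"
  have fE: "finite E" using finite_subset[OF E PP_fin] .
  have Eb: "\<And>e. e \<in> E \<Longrightarrow> 2 \<le> e \<and> e \<le> ?n" using E PP_sub[of x] by auto
  let ?S1 = "?P - E - Suc ` E" and ?S2 = "Suc ` E \<inter> {..?n} - ?P"
  have c: "card (PP (phi E x)) = card ?S1 + card ?S2"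
    unfolding PP_phi[OF E na] by (rule card_Un_disjoint) (use PP_fin fE in auto)
  have d1: "E \<inter> Suc ` E = {}" using na unfolding nonadj_def by auto
  have "card ?S1 = card (?P - (E \<union> (Suc ` E \<inter> ?P)))" by (rule arg_cong[where f=card]) auto
  also have "\<dots> = card ?P - card (E \<union> (Suc ` E \<inter> ?P))"
    by (rule card_Diff_subset) (use fE E in auto)
  also have "card (E \<union> (Suc ` E \<inter> ?P)) = card E + card (Suc ` E \<inter> ?P)"
    by (rule card_Un_disjoint) (use fE d1 in auto)
  also have "Suc ` E \<inter> ?P = Suc ` {e\<in>E. Suc e \<in> ?P}" by auto
  also have "card \<dots> = card {e\<in>E. Suc e \<in> ?P}" by (rule card_image) auto
  finally have c1: "card ?S1 = card ?P - (card E + card {e\<in>E. Suc e \<in> ?P})" .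
  have le1: "card E + card {e\<in>E. Suc e \<in> ?P} \<le> card ?P"
  proof -
    have "card E + card {e\<in>E. Suc e \<in> ?P} = card (E \<union> Suc ` {e\<in>E. Suc e \<in> ?P})"
      by (subst card_Un_disjoint) (use fE d1 in \<open>auto simp: card_image\<close>)
    also have "\<dots> \<le> card ?P" by (rule card_mono) (use PP_fin E in auto)
    finally show ?thesis .
  qed
  have "?S2 = Suc ` {e\<in>E. e < ?n \<and> Suc e \<notin> ?P}" by auto
  then have c2: "card ?S2 = card {e\<in>E. e < ?n \<and> Suc e \<notin> ?P}" by (simp add: card_image)
  have "E = {e\<in>E. Suc e \<in> ?P} \<union> ({e\<in>E. e < ?n \<and> Suc e \<notin> ?P} \<union> {e\<in>E. e = ?n})"
    using Eb PP_sub[of x] by fastforce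
  then have "card E = card ({e\<in>E. Suc e \<in> ?P} \<union> ({e\<in>E. e < ?n \<and> Suc e \<notin> ?P} \<union> {e\<in>E. e = ?n}))"
    by simp
  also have "\<dots> = card {e\<in>E. Suc e \<in> ?P} + card ({e\<in>E. e < ?n \<and> Suc e \<notin> ?P} \<union> {e\<in>E. e = ?n})"
    by (rule card_Un_disjoint) (use fE PP_sub[of x] in auto)
  also have "card ({e\<in>E. e < ?n \<and> Suc e \<notin> ?P} \<union> {e\<in>E. e = ?n}) = card {e\<in>E. e < ?n \<and> Suc e \<notin> ?P} + card {e\<in>E. e = ?n}"
    by (rule card_Un_disjoint) (use fE in auto)
  finally have cE: "card E = card {e\<in>E. Suc e \<in> ?P} + (card {e\<in>E. e < ?n \<and> Suc e \<notin> ?P} + card {e\<in>E. e = ?n})" .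
  have s1: "(\<Sum>e\<in>E. of_bool (Suc e \<in> ?P) :: int) = int (card {e\<in>E. Suc e \<in> ?P})"
  proof -
    have "{e\<in>E. Suc e \<in> ?P} = E \<inter> {e. Suc e \<in> ?P}" by blast
    then show ?thesis using fE by simp
  qed
  have s2: "(\<Sum>e\<in>E. of_bool (e = ?n) :: int) = int (card {e\<in>E. e = ?n})"
  proof -
    have "{e\<in>E. e = ?n} = E \<inter> {e. e = ?n}" by blast
    then show ?thesis using fE by simp
  qed
  have "dropI x E = 2 * (\<Sum>e\<in>E. of_bool (Suc e \<in> ?P) :: int) + (\<Sum>e\<in>E. of_bool (e = ?n))"
    unfolding dropI_def sum.distrib sum_distrib_left ..
  then have "dropI x E = 2 * int (card {e\<in>E. Suc e \<in> ?P}) + int (card {e\<in>E. e = ?n})"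
    using s1 s2 by simp
  then show ?thesis using c c1 c2 cE le1 by linarith
qed


lemma len_deriv: "length (deriv x) = length x - 1"
  by (simp add: deriv_def del: upt_Suc)

lemma nth_deriv: "i < length x - 1 \<Longrightarrow> deriv x ! i \<longleftrightarrow> i + 2 \<in> PP x"
  by (auto simp add: deriv_def PP_def nth_upt simp del: upt_Suc)

lemma run_starts_img: "(\<lambda>i. i + 2) ` run_starts (deriv x) = {e\<in>PP x. e - 1 \<notin> PP x}"
proof (rule set_eqI, rule iffI)
  fix e assume "e \<in> (\<lambda>i. i + 2) ` run_starts (deriv x)"
  then obtain i where e: "e = i + 2" and i: "i < length x - 1" "deriv x ! i"
     "i = 0 \<or> \<not> deriv x ! (i - 1)"
    by (auto simp: run_starts_def len_deriv)
  have "e \<in> PP x" using i e nth_deriv by auto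
  moreover have "e - 1 \<notin> PP x"
  proof (cases "i = 0")
    case True then show ?thesis using e PP_sub[of x] by auto
  next
    case False
    then have "\<not> deriv x ! (i - 1)" using i by auto
    then show ?thesis using nth_deriv[of "i - 1" x] i False e by auto
  qed
  ultimately show "e \<in> {e\<in>PP x. e - 1 \<notin> PP x}" by simp
next
  fix e assume e: "e \<in> {e\<in>PP x. e - 1 \<notin> PP x}"
  then have e2: "2 \<le> e" "e \<le> length x" using PP_sub[of x] by auto
  let ?i = "e - 2"
  have "?i \<in> run_starts (deriv x)"
    unfolding run_starts_def len_deriv
  proof (intro CollectI conjI)
    show "?i < length x - 1" using e2 by simp
    have ee: "e - 2 + 2 = e" using e2 by simp
    show "deriv x ! ?i" using e e2 by (subst nth_deriv) (auto simp only: ee)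
    show "?i = 0 \<or> \<not> deriv x ! (?i - 1)"
    proof (cases "?i = 0")
      case False
      have ee: "?i - 1 + 2 = e - 1" using e2 False by simp
      have "?i - 1 < length x - 1" using e2 by simp
      then show ?thesis using e nth_deriv[of "?i - 1" x] unfolding ee by simp
    qed simp
  qed
  then show "e \<in> (\<lambda>i. i + 2) ` run_starts (deriv x)" using e2 by force
qed

lemma num_runs_eq: "num_runs (deriv x) = card {e\<in>PP x. e - 1 \<notin> PP x}"
  unfolding num_runs_def run_starts_img[symmetric] by (subst card_image) (auto simp: inj_on_def)

lemma num_runs1_eq: "num_runs_len1 (deriv x) = card {e\<in>PP x. e - 1 \<notin> PP x \<and> Suc e \<notin> PP x}"
proof -
  have "(\<lambda>i. i + 2) ` {i \<in> run_starts (deriv x). Suc i = length (deriv x) \<or> \<not> deriv x ! Suc i}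
      = {e\<in>PP x. e - 1 \<notin> PP x \<and> Suc e \<notin> PP x}" (is "?L = ?R")
  proof -
    have "?L = {e \<in> (\<lambda>i. i + 2) ` run_starts (deriv x). Suc e \<notin> PP x}"
    proof (rule set_eqI, rule iffI)
      fix e assume "e \<in> ?L"
      then obtain i where i: "i \<in> run_starts (deriv x)" "e = i + 2"
        "Suc i = length (deriv x) \<or> \<not> deriv x ! Suc i" by auto
      have il: "i < length x - 1" using i(1) by (simp add: run_starts_def len_deriv)
      have "Suc e \<notin> PP x"
      proof (cases "Suc i = length (deriv x)")
        case True then show ?thesis using i(2) PP_sub[of x] by (auto simp: len_deriv)
      next
        case False
        then have "Suc i < length x - 1" using il by (simp add: len_deriv)
        then show ?thesis using i nth_deriv[of "Suc i" x] False by auto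
      qed
      then show "e \<in> {e \<in> (\<lambda>i. i + 2) ` run_starts (deriv x). Suc e \<notin> PP x}" using i by auto
    next
      fix e assume "e \<in> {e \<in> (\<lambda>i. i + 2) ` run_starts (deriv x). Suc e \<notin> PP x}"
      then obtain i where i: "i \<in> run_starts (deriv x)" "e = i + 2" "Suc e \<notin> PP x" by auto
      have il: "i < length x - 1" using i(1) by (simp add: run_starts_def len_deriv)
      have "Suc i = length (deriv x) \<or> \<not> deriv x ! Suc i"
      proof (cases "Suc i = length (deriv x)")
        case False
        then have "Suc i < length x - 1" using il by (simp add: len_deriv)
        then show ?thesis using i nth_deriv[of "Suc i" x] by auto
      qed simp
      then show "e \<in> ?L" using i by auto
    qed
    also have "\<dots> = ?R" unfolding run_starts_img by auto
    finally show ?thesis .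
  qed
  then show ?thesis unfolding num_runs_len1_def by (metis (no_types, lifting) card_image inj_on_def add_right_cancel)
qed


lemma card_split: "finite S \<Longrightarrow> card S = card {e\<in>S. Q e} + card {e\<in>S. \<not> Q e}"
proof -
  assume f: "finite S"
  have "S = {e\<in>S. Q e} \<union> {e\<in>S. \<not> Q e}" by blast
  then have "card S = card ({e\<in>S. Q e} \<union> {e\<in>S. \<not> Q e})" by simp
  also have "\<dots> = card {e\<in>S. Q e} + card {e\<in>S. \<not> Q e}"
    by (rule card_Un_disjoint) (use f in auto)
  finally show ?thesis .
qed

lemma ends_starts:
  assumes f: "finite S" and z: "0 \<notin> S"
  shows "card {e\<in>S. Suc e \<notin> S} = card {e\<in>S. e - 1 \<notin> S}"
proof -
  have "Suc ` {e\<in>S. Suc e \<in> S} = {e\<in>S. e - 1 \<in> S}"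
  proof (rule set_eqI, rule iffI)
    fix e assume "e \<in> {e\<in>S. e - 1 \<in> S}"
    then have "e \<in> S" "e - 1 \<in> S" by auto
    moreover then have "e \<noteq> 0" using z by metis
    ultimately show "e \<in> Suc ` {e\<in>S. Suc e \<in> S}"
      by (intro image_eqI[of e Suc "e - 1"]) auto
  qed auto
  then have "card {e\<in>S. Suc e \<in> S} = card {e\<in>S. e - 1 \<in> S}"
    by (metis (no_types, lifting) card_image inj_Suc inj_on_subset subset_UNIV)
  moreover have "card S = card {e\<in>S. Suc e \<in> S} + card {e\<in>S. \<not> Suc e \<in> S}"
    using card_split[OF f] .
  moreover have "card S = card {e\<in>S. e - 1 \<in> S} + card {e\<in>S. \<not> e - 1 \<in> S}"
    using card_split[OF f] .
  ultimately show ?thesis by simp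
qed

definition G :: "bool list \<Rightarrow> nat set set" where
  "G x = {E. E \<subseteq> PP x \<and> nonadj E \<and> card E \<le> 2}"

lemma Phi_eq: "Phi 2 x = (\<lambda>E. phi E x) ` G x"
proof (rule set_eqI, rule iffI)
  fix y assume "y \<in> Phi 2 x"
  then obtain E where y: "y = phi E x" and gp: "grain_pattern (length x) E" and c: "card E \<le> 2"
    by (auto simp: Phi_def)
  have Es: "E \<subseteq> {2..length x}" using gp by (simp add: grain_pattern_def)
  then have fE: "finite E" using finite_subset by blast
  have "y = phi (E \<inter> PP x) x" using y phi_restrict[OF Es] by simp
  moreover have "E \<inter> PP x \<in> G x"
    unfolding G_def using gp c card_mono[OF fE, of "E \<inter> PP x"]
    by (auto simp: grain_pattern_def nonadj_def)
  ultimately show "y \<in> (\<lambda>E. phi E x) ` G x" by blast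
next
  fix y assume "y \<in> (\<lambda>E. phi E x) ` G x"
  then obtain E where y: "y = phi E x" and E: "E \<in> G x" by blast
  have "grain_pattern (length x) E" using E PP_sub[of x]
    by (auto simp: G_def grain_pattern_def nonadj_def)
  then show "y \<in> Phi 2 x" using y E by (auto simp: Phi_def G_def)
qed

lemma card_Phi:
  "card {y \<in> Phi 2 x. Q y} = card {E \<in> G x. Q (phi E x)}"
proof -
  have "{y \<in> Phi 2 x. Q y} = (\<lambda>E. phi E x) ` {E \<in> G x. Q (phi E x)}"
    unfolding Phi_eq by blast
  moreover have "inj_on (\<lambda>E. phi E x) {E \<in> G x. Q (phi E x)}"
    by (rule inj_onI) (use phi_inj in \<open>auto simp: G_def\<close>)
  ultimately show ?thesis by (simp add: card_image)
qed

lemma A_drop: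
  "card {y \<in> Phi 2 x. int (weight (deriv y)) = int (weight (deriv x)) - j}
   = card {E \<in> G x. dropI x E = j}"
  unfolding card_Phi
proof (rule arg_cong[where f=card], rule Collect_cong)
  fix E show "(E \<in> G x \<and> int (weight (deriv (phi E x))) = int (weight (deriv x)) - j) =
          (E \<in> G x \<and> dropI x E = j)"
    using weight_phi[of E x] by (auto simp: G_def weight_deriv)
qed


lemma dropI_eq:
  assumes fE: "finite E"
  shows "dropI x E = 2 * int (card {e\<in>E. Suc e \<in> PP x}) + int (card {e\<in>E. e = length x})"
proof -
  let ?P = "PP x" and ?n = "length x"
  have s1: "(\<Sum>e\<in>E. of_bool (Suc e \<in> ?P) :: int) = int (card {e\<in>E. Suc e \<in> ?P})"
  proof -
    have "{e\<in>E. Suc e \<in> ?P} = E \<inter> {e. Suc e \<in> ?P}" by blast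
    then show ?thesis using fE by simp
  qed
  have s2: "(\<Sum>e\<in>E. of_bool (e = ?n) :: int) = int (card {e\<in>E. e = ?n})"
  proof -
    have "{e\<in>E. e = ?n} = E \<inter> {e. e = ?n}" by blast
    then show ?thesis using fE by simp
  qed
  have "dropI x E = 2 * (\<Sum>e\<in>E. of_bool (Suc e \<in> ?P) :: int) + (\<Sum>e\<in>E. of_bool (e = ?n))"
    unfolding dropI_def sum.distrib sum_distrib_left ..
  then show ?thesis using s1 s2 by simp
qed

lemma cn_le1: "card {e\<in>E. e = (k::nat)} \<le> 1"
proof -
  have ss: "{e\<in>E. e = k} \<subseteq> {k}" by blast
  have "card {e\<in>E. e = k} \<le> card {k}" using card_mono[OF _ ss] by simp
  then show ?thesis by simp
qed

lemma G_fin: "E \<in> G x \<Longrightarrow> finite E"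
  unfolding G_def using PP_fin finite_subset by auto

lemma set01:
  "{E\<in>G x. dropI x E = 0} \<union> {E\<in>G x. dropI x E = 1} = {E. E \<subseteq> {e\<in>PP x. Suc e \<notin> PP x} \<and> card E \<le> 2}"
proof (rule set_eqI)
  fix E
  show "E \<in> {E\<in>G x. dropI x E = 0} \<union> {E\<in>G x. dropI x E = 1} \<longleftrightarrow> E \<in> {E. E \<subseteq> {e\<in>PP x. Suc e \<notin> PP x} \<and> card E \<le> 2}"
  proof
    assume "E \<in> {E\<in>G x. dropI x E = 0} \<union> {E\<in>G x. dropI x E = 1}"
    then have EG: "E \<in> G x" and d: "dropI x E \<le> 1" by auto
    have f: "finite E" using G_fin[OF EG] .
    have "card {e\<in>E. Suc e \<in> PP x} = 0" using d dropI_eq[OF f, of x] by linarith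
    then have "{e\<in>E. Suc e \<in> PP x} = {}" using f by simp
    then show "E \<in> {E. E \<subseteq> {e\<in>PP x. Suc e \<notin> PP x} \<and> card E \<le> 2}"
      using EG unfolding G_def by blast
  next
    assume "E \<in> {E. E \<subseteq> {e\<in>PP x. Suc e \<notin> PP x} \<and> card E \<le> 2}"
    then have s: "E \<subseteq> {e\<in>PP x. Suc e \<notin> PP x}" and c: "card E \<le> 2" by auto
    have "E \<subseteq> PP x" using s by blast
    then have f: "finite E" using finite_subset PP_fin by blast
    have EG: "E \<in> G x" using s c unfolding G_def nonadj_def by blast
    have "{e\<in>E. Suc e \<in> PP x} = {}" using s by blast
    then have "card {e\<in>E. Suc e \<in> PP x} = 0" by (simp only: card.empty)
    then have "dropI x E \<le> 1" using dropI_eq[OF f, of x] cn_le1[of E "length x"] by linarith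
    moreover have "dropI x E \<ge> 0" using dropI_eq[OF f, of x] by simp
    ultimately show "E \<in> {E\<in>G x. dropI x E = 0} \<union> {E\<in>G x. dropI x E = 1}" using EG by auto
  qed
qed


lemma G_drop23:
  assumes EG: "E \<in> G x"
  shows "dropI x E = 2 \<or> dropI x E = 3 \<longleftrightarrow> card {e\<in>E. Suc e \<in> PP x} = 1"
  using dropI_eq[OF G_fin[OF EG], of x] cn_le1[of E "length x"] by linarith

lemma set23:
  "{E\<in>G x. dropI x E = 2} \<union> {E\<in>G x. dropI x E = 3}
   = (\<lambda>d. {d}) ` {e\<in>PP x. Suc e \<in> PP x}
     \<union> (\<lambda>(d,e). {d,e}) ` {(d,e). d \<in> {e\<in>PP x. Suc e \<in> PP x} \<and> e \<in> {e\<in>PP x. Suc e \<notin> PP x} \<and> Suc d \<noteq> e}"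
  (is "?L = ?R")
proof (rule set_eqI, rule iffI)
  fix E assume "E \<in> ?L"
  then have EG: "E \<in> G x" and c1: "card {e\<in>E. Suc e \<in> PP x} = 1" using G_drop23 by auto
  have f: "finite E" using G_fin[OF EG] .
  have EP: "E \<subseteq> PP x" and na: "nonadj E" and cE: "card E \<le> 2" using EG by (auto simp: G_def)
  obtain d where dd: "{e\<in>E. Suc e \<in> PP x} = {d}" using c1 by (rule card_1_singletonE)
  then have dE: "d \<in> E" and dD: "Suc d \<in> PP x" by auto
  have dP: "d \<in> PP x" using dE EP by blast
  have "card E \<noteq> 0" using dE f by auto
  then have "card E = 1 \<or> card E = 2" using cE by linarith
  then show "E \<in> ?R"
  proof
    assume "card E = 1"
    then obtain a where "E = {a}" by (rule card_1_singletonE)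
    then have "E = {d}" using dE by simp
    then show ?thesis using dP dD by blast
  next
    assume "card E = 2"
    then obtain a b where ab: "E = {a,b}" "a \<noteq> b" unfolding card_2_iff by blast
    obtain e where de: "E = {d,e}" "e \<noteq> d"
      using ab dE by auto
    have "e \<notin> {e\<in>E. Suc e \<in> PP x}" using dd de by blast
    then have eP: "e \<in> PP x" "Suc e \<notin> PP x" using de EP by auto
    have "Suc d \<noteq> e" using na de unfolding nonadj_def by blast
    then have "(d,e) \<in> {(d,e). d \<in> {e\<in>PP x. Suc e \<in> PP x} \<and> e \<in> {e\<in>PP x. Suc e \<notin> PP x} \<and> Suc d \<noteq> e}"
      using dP dD eP by blast
    then show ?thesis using de(1) by force
  qed
next
  fix E assume "E \<in> ?R"
  then consider (one) d where "E = {d}" "d \<in> PP x" "Suc d \<in> PP x"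
    | (two) d e where "E = {d,e}" "d \<in> PP x" "Suc d \<in> PP x" "e \<in> PP x" "Suc e \<notin> PP x" "Suc d \<noteq> e"
  proof (elim UnE)
    assume "E \<in> (\<lambda>d. {d}) ` {e\<in>PP x. Suc e \<in> PP x}"
    then obtain d where "E = {d}" "d \<in> PP x" "Suc d \<in> PP x" by (elim imageE) simp
    moreover assume "\<And>d. E = {d} \<Longrightarrow> d \<in> PP x \<Longrightarrow> Suc d \<in> PP x \<Longrightarrow> thesis"
    ultimately show thesis by blast
  next
    assume "E \<in> (\<lambda>(d,e). {d,e}) ` {(d,e). d \<in> {e\<in>PP x. Suc e \<in> PP x} \<and> e \<in> {e\<in>PP x. Suc e \<notin> PP x} \<and> Suc d \<noteq> e}"
    then obtain p where p: "p \<in> {(d,e). d \<in> {e\<in>PP x. Suc e \<in> PP x} \<and> e \<in> {e\<in>PP x. Suc e \<notin> PP x} \<and> Suc d \<noteq> e}"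
      "E = (\<lambda>(d,e). {d,e}) p" by (elim imageE)
    obtain d e where "p = (d,e)" by (cases p)
    then have "E = {d,e}" "d \<in> PP x" "Suc d \<in> PP x" "e \<in> PP x" "Suc e \<notin> PP x" "Suc d \<noteq> e"
      using p by auto
    moreover assume "\<And>d e. E = {d,e} \<Longrightarrow> d \<in> PP x \<Longrightarrow> Suc d \<in> PP x \<Longrightarrow> e \<in> PP x \<Longrightarrow> Suc e \<notin> PP x \<Longrightarrow> Suc d \<noteq> e \<Longrightarrow> thesis"
    ultimately show thesis by blast
  qed
  then show "E \<in> ?L"
  proof cases
    case one
    have EG: "E \<in> G x" using one by (simp add: G_def nonadj_def)
    have "{e\<in>E. Suc e \<in> PP x} = {d}" using one by auto
    then have "card {e\<in>E. Suc e \<in> PP x} = 1" by simp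
    then show ?thesis using G_drop23[OF EG] EG by blast
  next
    case two
    have ne: "d \<noteq> e" using two by auto
    have "nonadj E" using two unfolding nonadj_def by auto
    moreover have "card E \<le> 2" using two ne by simp
    ultimately have EG: "E \<in> G x" using two by (simp add: G_def)
    have "{e\<in>E. Suc e \<in> PP x} = {d}" using two by auto
    then have "card {e\<in>E. Suc e \<in> PP x} = 1" by simp
    then show ?thesis using G_drop23[OF EG] EG by blast
  qed
qed

lemma set4:
  "{E\<in>G x. dropI x E = 4} = {E. E \<subseteq> {e\<in>PP x. Suc e \<in> PP x} \<and> card E = 2 \<and> nonadj E}"
proof (rule set_eqI, rule iffI)
  fix E assume "E \<in> {E\<in>G x. dropI x E = 4}"
  then have EG: "E \<in> G x" and d4: "dropI x E = 4" by auto
  have f: "finite E" using G_fin[OF EG] .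
  have EP: "E \<subseteq> PP x" and na: "nonadj E" and cE: "card E \<le> 2" using EG by (auto simp: G_def)
  have le: "card {e\<in>E. Suc e \<in> PP x} \<le> card E" by (rule card_mono[OF f]) blast
  have "card {e\<in>E. Suc e \<in> PP x} = 2"
    using dropI_eq[OF f, of x] cn_le1[of E "length x"] d4 le cE by linarith
  then have c2: "card {e\<in>E. Suc e \<in> PP x} = card E" "card E = 2" using le cE by auto
  have "{e\<in>E. Suc e \<in> PP x} = E" by (rule card_subset_eq[OF f _ c2(1)]) blast
  then show "E \<in> {E. E \<subseteq> {e\<in>PP x. Suc e \<in> PP x} \<and> card E = 2 \<and> nonadj E}"
    using EP na c2 by blast
next
  fix E assume A: "E \<in> {E. E \<subseteq> {e\<in>PP x. Suc e \<in> PP x} \<and> card E = 2 \<and> nonadj E}"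
  then have EP: "E \<subseteq> PP x" and c: "card E = 2" and na: "nonadj E"
    and ED: "\<And>e. e \<in> E \<Longrightarrow> Suc e \<in> PP x" by auto
  have f: "finite E" using c card.infinite by fastforce
  have EG: "E \<in> G x" using EP c na by (simp add: G_def)
  have "{e\<in>E. Suc e \<in> PP x} = E" using ED by blast
  moreover have "{e\<in>E. e = length x} = {}" using ED PP_sub[of x] by fastforce
  ultimately have "dropI x E = 4" using dropI_eq[OF f, of x] c by simp
  then show "E \<in> {E\<in>G x. dropI x E = 4}" using EG by simp
qed


lemma C01:
  assumes f: "finite S"
  shows "card {E. E \<subseteq> S \<and> card E \<le> 2} = 1 + card S + (card S choose 2)"
proof -
  let ?F = "\<lambda>k. {E. E \<subseteq> S \<and> card E = k}"
  have fin: "\<And>k. finite (?F k)"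
    using finite_subset[of _ "Pow S"] f by auto
  have eq: "{E. E \<subseteq> S \<and> card E \<le> 2} = ?F 0 \<union> (?F 1 \<union> ?F 2)"
    by auto
  have c1: "card (?F 1 \<union> ?F 2) = card (?F 1) + card (?F 2)"
    by (rule card_Un_disjoint[OF fin fin]) auto
  have c0: "card (?F 0 \<union> (?F 1 \<union> ?F 2)) = card (?F 0) + card (?F 1 \<union> ?F 2)"
    by (rule card_Un_disjoint) (use fin in auto)
  show ?thesis unfolding eq c0 c1 n_subsets[OF f] by simp
qed


lemma C23:
  assumes fD: "finite D" and fN: "finite N" and dis: "D \<inter> N = {}"
  shows "card ((\<lambda>d. {d}) ` D \<union> (\<lambda>(d,e). {d,e}) ` {(d,e). d \<in> D \<and> e \<in> N \<and> Suc d \<noteq> e})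
     + card {d\<in>D. Suc d \<in> N} = card D + card D * card N"
proof -
  let ?T = "{(d,e). d \<in> D \<and> e \<in> N \<and> Suc d \<noteq> e}"
  have Tsub: "?T \<subseteq> D \<times> N" by auto
  have fT: "finite ?T" using finite_subset[OF Tsub] fD fN by blast
  have "D \<times> N = ?T \<union> (\<lambda>d. (d, Suc d)) ` {d\<in>D. Suc d \<in> N}" by auto
  then have "card (D \<times> N) = card ?T + card ((\<lambda>d. (d, Suc d)) ` {d\<in>D. Suc d \<in> N})"
    using fT fD by (simp add: card_Un_disjoint) (subst card_Un_disjoint; auto)
  also have "card ((\<lambda>d. (d, Suc d)) ` {d\<in>D. Suc d \<in> N}) = card {d\<in>D. Suc d \<in> N}"
    by (rule card_image) (auto simp: inj_on_def)
  finally have cT: "card ?T + card {d\<in>D. Suc d \<in> N} = card D * card N"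
    by (simp add: card_cartesian_product)
  have i1: "card ((\<lambda>d. {d}) ` D) = card D" by (rule card_image) (auto simp: inj_on_def)
  have i2: "card ((\<lambda>(d,e). {d,e}) ` ?T) = card ?T"
  proof (rule card_image, rule inj_onI)
    fix p q assume p: "p \<in> ?T" and q: "q \<in> ?T" and eq: "(\<lambda>(d,e). {d,e}) p = (\<lambda>(d,e). {d,e}) q"
    obtain d e where pe: "p = (d,e)" by (cases p)
    obtain d' e' where qe: "q = (d',e')" by (cases q)
    have h: "{d,e} = {d',e'}" "d \<in> D" "e \<in> N" "d' \<in> D" "e' \<in> N" using eq p q pe qe by auto
    have "d \<noteq> e'" "d' \<noteq> e" using h dis by auto
    then have "d = d'" "e = e'" using h(1) by (auto simp: doubleton_eq_iff)
    then show "p = q" using pe qe by simp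
  qed
  have fU: "finite ((\<lambda>(d,e). {d,e}) ` ?T)" using fT by simp
  have disj: "(\<lambda>d. {d}) ` D \<inter> (\<lambda>(d,e). {d,e}) ` ?T = {}"
  proof (rule ccontr)
    assume "(\<lambda>d. {d}) ` D \<inter> (\<lambda>(d,e). {d,e}) ` ?T \<noteq> {}"
    then obtain a d e where "{a} = {d,e}" "d \<in> D" "e \<in> N" by auto
    then show False using dis by (auto simp: doubleton_eq_iff)
  qed
  have "card ((\<lambda>d. {d}) ` D \<union> (\<lambda>(d,e). {d,e}) ` ?T) = card D + card ?T"
    using card_Un_disjoint[OF finite_imageI[OF fD] fU disj] i1 i2 by simp
  then show ?thesis using cT by simp
qed


lemma C4:
  assumes fD: "finite D"
  shows "card {E. E \<subseteq> D \<and> card E = 2 \<and> nonadj E} + card {d\<in>D. Suc d \<in> D} = card D choose 2"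
proof -
  let ?A = "{E. E \<subseteq> D \<and> card E = 2 \<and> nonadj E}"
  let ?B = "(\<lambda>d. {d, Suc d}) ` {d\<in>D. Suc d \<in> D}"
  have eq: "{E. E \<subseteq> D \<and> card E = 2} = ?A \<union> ?B"
  proof (rule set_eqI, rule iffI)
    fix E assume E: "E \<in> {E. E \<subseteq> D \<and> card E = 2}"
    show "E \<in> ?A \<union> ?B"
    proof (cases "nonadj E")
      case True then show ?thesis using E by simp
    next
      case False
      then obtain j where j: "j \<in> E" "Suc j \<in> E" unfolding nonadj_def by blast
      have fE: "finite E" using E card.infinite by fastforce
      have "{j, Suc j} \<subseteq> E" using j by simp
      moreover have "card {j, Suc j} = card E" using E by simp
      ultimately have "{j, Suc j} = E" using card_subset_eq[OF fE] by blast
      then show ?thesis using E j by auto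
    qed
  next
    fix E assume "E \<in> ?A \<union> ?B"
    then show "E \<in> {E. E \<subseteq> D \<and> card E = 2}" by auto
  qed
  have fin: "finite {E. E \<subseteq> D \<and> card E = 2}" using finite_subset[of _ "Pow D"] fD by auto
  have fA: "finite ?A" using finite_subset[OF _ fin, of ?A] by blast
  have fB: "finite ?B" using fD by simp
  have disj: "?A \<inter> ?B = {}" by (auto simp: nonadj_def)
  have iB: "card ?B = card {d\<in>D. Suc d \<in> D}"
  proof (rule card_image, rule inj_onI)
    fix a b assume "{a, Suc a} = {b, Suc b}"
    then show "a = b" by (auto simp: doubleton_eq_iff)
  qed
  have "card D choose 2 = card {E. E \<subseteq> D \<and> card E = 2}" using n_subsets[OF fD] by simp
  also have "\<dots> = card ?A + card ?B" unfolding eq by (rule card_Un_disjoint[OF fA fB disj])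
  finally show ?thesis using iB by simp
qed


lemma G_finite: "finite (G x)"
proof -
  have "G x \<subseteq> Pow (PP x)" by (auto simp: G_def)
  then show ?thesis using finite_subset PP_fin by blast
qed

theorem lemma4p3:
  fixes x :: "bool list" and n :: nat
  assumes "n \<ge> 1" and "length x = n"
  defines "\<omega> \<equiv> weight (deriv x)"
      and "m \<equiv> num_runs (deriv x)"
      and "m1 \<equiv> num_runs_len1 (deriv x)"
      and "A \<equiv> (\<lambda>j::int. card {y \<in> Phi 2 x. int (weight (deriv y)) = int (weight (deriv x)) - j})"
  shows "(int (A 0) + int (A 1) = 1 + int m + int (m choose 2))
    \<and> (int (A 2) + int (A 3) = (int \<omega> - int m) * (int m + 1) - (int m - int m1))
    \<and> (int (A 4) = int ((\<omega> - m) choose 2) - (int \<omega> - int m) + (int m - int m1))"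
proof -
  define P where "P = PP x"
  define D where "D = {e\<in>P. Suc e \<in> P}"
  define N where "N = {e\<in>P. Suc e \<notin> P}"
  have fP: "finite P" unfolding P_def by (rule PP_fin)
  have fD: "finite D" "finite N" using fP unfolding D_def N_def by auto
  have z: "0 \<notin> P" using PP_sub[of x] unfolding P_def by auto
  have Aeq: "\<And>j. A j = card {E \<in> G x. dropI x E = j}" unfolding A_def by (rule A_drop)
  have om: "\<omega> = card D + card N" unfolding \<omega>_def weight_deriv P_def[symmetric] D_def N_def
    by (rule card_split[OF fP])
  have mN: "m = card N" unfolding m_def num_runs_eq P_def[symmetric] N_def
    using ends_starts[OF fP z] by simp
  define K where "K = {e\<in>P. e - 1 \<notin> P \<and> Suc e \<in> P}"
  have mK: "m = m1 + card K"
  proof -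
    have fS: "finite {e\<in>P. e - 1 \<notin> P}" using fP by simp
    have "m = card {e\<in>P. e - 1 \<notin> P}" unfolding m_def num_runs_eq P_def ..
    also have "\<dots> = card {e\<in>{e\<in>P. e - 1 \<notin> P}. \<not> Suc e \<in> P} + card {e\<in>{e\<in>P. e - 1 \<notin> P}. Suc e \<in> P}"
      using card_split[OF fS, of "\<lambda>e. \<not> Suc e \<in> P"] by simp
    also have "{e\<in>{e\<in>P. e - 1 \<notin> P}. \<not> Suc e \<in> P} = {e\<in>P. e - 1 \<notin> P \<and> Suc e \<notin> P}" by auto
    also have "{e\<in>{e\<in>P. e - 1 \<notin> P}. Suc e \<in> P} = K" unfolding K_def by auto
    finally show ?thesis unfolding m1_def num_runs1_eq P_def by simp
  qed
  have zD: "0 \<notin> D" using z unfolding D_def by auto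
  have KD: "card K = card {e\<in>D. e - 1 \<notin> D}"
  proof -
    have "K = {e\<in>D. e - 1 \<notin> D}"
    proof (rule set_eqI)
      fix e show "e \<in> K \<longleftrightarrow> e \<in> {e\<in>D. e - 1 \<notin> D}"
      proof (cases "e = 0")
        case True then show ?thesis using z unfolding K_def D_def by auto
      next
        case False then have "Suc (e - 1) = e" by simp
        then show ?thesis unfolding K_def D_def by auto
      qed
    qed
    then show ?thesis by simp
  qed
  have KN: "card K = card {d\<in>D. Suc d \<in> N}"
  proof -
    have "card K = card {e\<in>D. Suc e \<notin> D}" using KD ends_starts[OF fD(1) zD] by simp
    also have "{e\<in>D. Suc e \<notin> D} = {d\<in>D. Suc d \<in> N}" unfolding D_def N_def by auto
    finally show ?thesis .
  qed
  have DD: "card D = card {d\<in>D. Suc d \<in> D} + card K"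
  proof -
    have "card D = card {d\<in>D. Suc d \<in> D} + card {d\<in>D. \<not> Suc d \<in> D}" using card_split[OF fD(1)] .
    also have "{d\<in>D. \<not> Suc d \<in> D} = {d\<in>D. Suc d \<in> N}" unfolding D_def N_def by auto
    finally show ?thesis using KN by simp
  qed
  have fG: "\<And>Q. finite {E\<in>G x. Q E}" using G_finite by simp
  have a: "A 0 + A 1 = 1 + m + (m choose 2)"
  proof -
    have "A 0 + A 1 = card ({E\<in>G x. dropI x E = 0} \<union> {E\<in>G x. dropI x E = 1})"
      unfolding Aeq by (rule card_Un_disjoint[symmetric, OF fG fG]) auto
    also have "\<dots> = card {E. E \<subseteq> N \<and> card E \<le> 2}" unfolding set01 N_def P_def ..
    also have "\<dots> = 1 + m + (m choose 2)" using C01[OF fD(2)] mN by simp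
    finally show ?thesis .
  qed
  have b: "A 2 + A 3 + card K = card D + card D * m"
  proof -
    have "A 2 + A 3 = card ({E\<in>G x. dropI x E = 2} \<union> {E\<in>G x. dropI x E = 3})"
      unfolding Aeq by (rule card_Un_disjoint[symmetric, OF fG fG]) auto
    also have "\<dots> = card ((\<lambda>d. {d}) ` D \<union> (\<lambda>(d,e). {d,e}) ` {(d,e). d \<in> D \<and> e \<in> N \<and> Suc d \<noteq> e})"
      unfolding set23 D_def N_def P_def ..
    finally show ?thesis using C23[OF fD(1) fD(2)] KN mN unfolding D_def N_def by auto
  qed
  have c: "A 4 + card {d\<in>D. Suc d \<in> D} = card D choose 2"
  proof -
    have "A 4 = card {E. E \<subseteq> D \<and> card E = 2 \<and> nonadj E}"
      unfolding Aeq set4 D_def P_def ..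
    then show ?thesis using C4[OF fD(1)] by simp
  qed
  have wm: "\<omega> - m = card D" using om mN by simp
  have wm': "int \<omega> - int m = int (card D)" using om mN by simp
  have mm1: "int m - int m1 = int (card K)" using mK by simp
  have r1: "int (A 0) + int (A 1) = 1 + int m + int (m choose 2)"
    using arg_cong[OF a, of int] by simp
  have b': "int (A 2) + int (A 3) + int (card K) = int (card D) + int (card D) * int m"
    using arg_cong[OF b, of int] by simp
  have r2: "int (A 2) + int (A 3) = int (card D) * (int m + 1) - int (card K)"
    using b' by (simp add: algebra_simps)
  have c': "int (A 4) + int (card {d\<in>D. Suc d \<in> D}) = int (card D choose 2)"
    using arg_cong[OF c, of int] by simp
  have DD': "int (card D) = int (card {d\<in>D. Suc d \<in> D}) + int (card K)"
    using arg_cong[OF DD, of int] by simp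
  have r3: "int (A 4) = int (card D choose 2) - int (card D) + int (card K)"
    using c' DD' by linarith
  show ?thesis unfolding wm' mm1 wm using r1 r2 r3 by blast
qed

end
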